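(* Let $u,v\in L^\infty(\mathbb{T})$ be nonnegative, $M:=\max\{\|u\|_{L^\infty},\|v\|_{L^\infty}\}$, $m_\infty:=\frac12\int_{\mathbb{T}}(u+v)dx>0$. There is $\varepsilon_0>0$ depending only on $M$ (namely $\varepsilon_0=1/(4MC_R)$, with $C_R$ the elliptic regularity constant below) such that for every $\varepsilon\in(0,\varepsilon_0)$ there exist positive constants $C_1,C_2$ depending only on $m_\infty,M,\varepsilon$ with $$\frac1{C_2}\int_{\mathbb{T}}\big((u-m_\infty)^2+(v-m_\infty)^2\big)dx\le\mathrm{E}[u,v]\le\frac1{C_1}\int_{\mathbb{T}}\big((u-m_\infty)^2+(v-m_\infty)^2\big)dx.$$
   Context: $\mathbb{T}=\mathbb{R}/\mathbb{Z}$ (measure $1$). $\rho:=u+v$, $j:=u-v$. $\phi$ is the unique solution (with zero mean, say) of $-\partial_{xx}\phi=\rho-2m_\infty$ on $\mathbb{T}$; it satisfies $\|\phi\|_{H^2(\mathbb{T})}\le C_R\|\rho-2m_\infty\|_{L^2(\mathbb{T})}$ for a universal constant $C_R>0$. $\mathrm{H}[u,v]:=\int_{\mathbb{T}}\big(\tfrac{u}{m_\infty}\log\tfrac{u}{m_\infty}-\tfrac{u}{m_\infty}+1\big)m_\infty dx+\int_{\mathbb{T}}\big(\tfrac{v}{m_\infty}\log\tfrac{v}{m_\infty}-\tfrac{v}{m_\infty}+1\big)m_\infty dx$ with $0\log0=0$, and $\mathrm{E}[u,v]:=\mathrm{H}[u,v]+\varepsilon\int_{\mathbb{T}}j\,\partial_x\phi\,dx$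 for a parameter $\varepsilon>0$. *)

theory Defs
  imports "HOL-Analysis.Analysis" "HOL-Probability.Essential_Supremum"
begin

(* Functions on the torus T = R/Z are modelled as 1-periodic functions real => real;
   integrals over T are integrals over [0,1]. *)

definition periodic1 :: "(real \<Rightarrow> real) \<Rightarrow> bool" where
  "periodic1 f \<longleftrightarrow> (\<forall>x. f (x + 1) = f x)"

(* phi is differentiable everywhere and its derivative is absolutely continuous with
   (weak) derivative chi, i.e. chi is the weak second derivative of phi *)
definition weak_second_deriv :: "(real \<Rightarrow> real) \<Rightarrow> (real \<Rightarrow> real) \<Rightarrow> bool" where
  "weak_second_deriv phi chi \<longleftrightarrow>
     (\<forall>x. phi differentiable (at x)) \<and>
     (\<forall>a b. a \<le> b \<longrightarrow> chi integrable_on {a..b} \<and>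
              deriv phi b - deriv phi a = integral {a..b} chi)"

definition poisson_sol :: "(real \<Rightarrow> real) \<Rightarrow> (real \<Rightarrow> real) \<Rightarrow> bool" where
  "poisson_sol f phi \<longleftrightarrow> periodic1 phi \<and> weak_second_deriv phi (\<lambda>x. - f x) \<and>
     integral {0..1} phi = 0"

definition L2_norm_T :: "(real \<Rightarrow> real) \<Rightarrow> real" where
  "L2_norm_T f = sqrt (integral {0..1} (\<lambda>x. (f x)\<^sup>2))"

definition H2_norm_T :: "(real \<Rightarrow> real) \<Rightarrow> (real \<Rightarrow> real) \<Rightarrow> real" where
  "H2_norm_T phi chi = sqrt (integral {0..1} (\<lambda>x. (phi x)\<^sup>2)
       + integral {0..1} (\<lambda>x. (deriv phi x)\<^sup>2) + integral {0..1} (\<lambda>x. (chi x)\<^sup>2))"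

definition elliptic_const :: "real \<Rightarrow> bool" where
  "elliptic_const CR \<longleftrightarrow> CR > 0 \<and>
     (\<forall>f phi. periodic1 f \<and> f \<in> borel_measurable lborel \<and> f integrable_on {0..1} \<and>
        (\<lambda>x. (f x)\<^sup>2) integrable_on {0..1} \<and> integral {0..1} f = 0 \<and> poisson_sol f phi
        \<longrightarrow> H2_norm_T phi (\<lambda>x. - f x) \<le> CR * L2_norm_T f)"

definition Linf_nonneg :: "(real \<Rightarrow> real) \<Rightarrow> bool" where
  "Linf_nonneg u \<longleftrightarrow> periodic1 u \<and> u \<in> borel_measurable lborel \<and> (\<forall>x. 0 \<le> u x) \<and>
     esssup (lebesgue_on {0..1}) (\<lambda>x. ereal (u x)) < \<infinity>"

definition Linf_norm_T :: "(real \<Rightarrow> real) \<Rightarrow> ereal" where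
  "Linf_norm_T u = esssup (lebesgue_on {0..1}) (\<lambda>x. ereal \<bar>u x\<bar>)"

definition pot :: "real \<Rightarrow> (real \<Rightarrow> real) \<Rightarrow> (real \<Rightarrow> real) \<Rightarrow> (real \<Rightarrow> real)" where
  "pot m u v = (THE phi. poisson_sol (\<lambda>x. u x + v x - 2 * m) phi)"

definition ent :: "real \<Rightarrow> real \<Rightarrow> real" where
  "ent m s = (let r = s / m in ((if r = 0 then 0 else r * ln r) - r + 1) * m)"

definition H_T :: "real \<Rightarrow> (real \<Rightarrow> real) \<Rightarrow> (real \<Rightarrow> real) \<Rightarrow> real" where
  "H_T m u v = integral {0..1} (\<lambda>x. ent m (u x)) + integral {0..1} (\<lambda>x. ent m (v x))"

definition E_T :: "real \<Rightarrow> real \<Rightarrow> (real \<Rightarrow> real) \<Rightarrow> (real \<Rightarrow> real) \<Rightarrow> real" where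
  "E_T eps m u v = H_T m u v +
     eps * integral {0..1} (\<lambda>x. (u x - v x) * deriv (pot m u v) x)"

end

theory Submission
  imports Defs
begin


lemma h_upper:
  fixes r :: real assumes "0 \<le> r"
  shows "(if r = 0 then 0 else r * ln r) - r + 1 \<le> (r - 1)^2"
proof (cases "r = 0")
  case False
  then have "r > 0" using assms by simp
  then have "ln r \<le> r - 1" by (rule ln_le_minus_one)
  then have "r * ln r \<le> r * (r - 1)" using assms by (simp add: mult_left_mono)
  then show ?thesis using False by (simp add: power2_eq_square algebra_simps)
qed simp

lemma h_nonneg:
  fixes r :: real assumes "0 \<le> r"
  shows "0 \<le> (if r = 0 then 0 else r * ln r) - r + 1"
proof (cases "r = 0")
  case False
  then have r: "r > 0" using assms by simp
  then have "ln (1/r) \<le> 1/r - 1" by (intro ln_le_minus_one) simp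
  then have "- ln r \<le> 1/r - 1" using r by (simp add: ln_div)
  then have "r * (- ln r) \<le> r * (1/r - 1)" using r by (intro mult_left_mono) auto
  also have "\<dots> = 1 - r" using r by (simp add: field_simps)
  finally show ?thesis using False r by (simp add: algebra_simps)
qed simp

lemma h_lower:
  fixes r K :: real assumes "0 \<le> r" "r \<le> K" "1 \<le> K"
  shows "(r - 1)^2 / (2*K) \<le> (if r = 0 then 0 else r * ln r) - r + 1"
proof (cases "r = 0")
  case True
  then show ?thesis using assms by (simp add: field_simps)
next
  case False
  then have r: "r > 0" using assms by simp
  define g where "g = (\<lambda>t::real. t * ln t - t + 1 - (t - 1)^2 / (2*K))"
  have Kp: "K > 0" using assms by simp
  have dg: "DERIV g t :> ln t - (t - 1) / K" if "t > 0" for t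
    unfolding g_def using that Kp
    by (auto intro!: derivative_eq_intros simp: field_simps power2_eq_square)
  have g1: "g 1 = 0" by (simp add: g_def)
  have "0 \<le> g r"
  proof (cases "r \<le> 1")
    case True
    have "g 1 \<le> g r"
    proof (rule DERIV_nonpos_imp_nonincreasing[OF True])
      fix t assume t: "r \<le> t" "t \<le> 1"
      then have tp: "t > 0" using r by simp
      have "ln t \<le> t - 1" using tp by (rule ln_le_minus_one)
      moreover have "(1 - t) / K \<le> 1 - t" using t assms
        by (simp add: divide_le_eq) (metis mult_le_cancel_left1 linorder_not_le diff_ge_0_iff_ge mult.commute less_eq_real_def)
      moreover have "(t-1)/K = -((1-t)/K)" by (metis minus_diff_eq minus_divide_left)
      ultimately have "ln t - (t - 1) / K \<le> 0" by linarith
      then show "\<exists>y. DERIV g t :> y \<and> y \<le> 0" using dg[OF tp] by blast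
    qed
    then show ?thesis using g1 by simp
  next
    case False
    then have r1: "1 \<le> r" by simp
    have "g 1 \<le> g r"
    proof (rule DERIV_nonneg_imp_nondecreasing[OF r1])
      fix t assume t: "1 \<le> t" "t \<le> r"
      then have tp: "t > 0" by simp
      have "ln (1/t) \<le> 1/t - 1" using tp by (intro ln_le_minus_one) simp
      then have l: "1 - 1/t \<le> ln t" using tp by (simp add: ln_div)
      have "(t - 1) / K \<le> (t - 1) / t" using t assms
        by (intro divide_left_mono) auto
      also have "\<dots> = 1 - 1/t" using tp by (simp add: field_simps)
      finally have "0 \<le> ln t - (t - 1) / K" using l by simp
      then show "\<exists>y. DERIV g t :> y \<and> 0 \<le> y" using dg[OF tp] by blast
    qed
    then show ?thesis using g1 by simp
  qed
  then show ?thesis using False by (simp add: g_def)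
qed

lemma ent_eq: "0 < m \<Longrightarrow> ent m s = m * ((if s/m = 0 then 0 else (s/m) * ln (s/m)) - s/m + 1)"
  by (simp add: ent_def Let_def)

lemma ent_upper: assumes "0 < m" "0 \<le> s" shows "ent m s \<le> (s - m)^2 / m"
proof -
  have "ent m s \<le> m * (s/m - 1)^2"
    using h_upper[of "s/m"] assms by (simp add: ent_eq mult_left_mono)
  also have "\<dots> = (s - m)^2 / m" using assms by (simp add: field_simps power2_eq_square)
  finally show ?thesis .
qed

lemma ent_nonneg: assumes "0 < m" "0 \<le> s" shows "0 \<le> ent m s"
  using h_nonneg[of "s/m"] assms by (simp add: ent_eq)

lemma ent_lower: assumes "0 < m" "m \<le> M" "0 \<le> s" "s \<le> M"
  shows "(s - m)^2 / (2*M) \<le> ent m s"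
proof -
  have "(s - m)^2 / (2*M) = m * ((s/m - 1)^2 / (2 * (M/m)))"
    using assms by (simp add: field_simps power2_eq_square)
  also have "\<dots> \<le> ent m s"
    unfolding ent_eq[OF assms(1)]
    by (rule mult_left_mono[OF h_lower]) (use assms in \<open>auto simp: field_simps\<close>)
  finally show ?thesis .
qed



lemma per_nat: "periodic1 f \<Longrightarrow> f (x + real n) = f x"
proof (induction n arbitrary: x)
  case 0 then show ?case by simp
next
  case (Suc n)
  have "f (x + real (Suc n)) = f ((x + real n) + 1)" by (simp add: algebra_simps)
  also have "\<dots> = f (x + real n)" using Suc.prems by (simp add: periodic1_def)
  finally show ?case using Suc by simp
qed

lemma per_int: assumes "periodic1 f" shows "f (x + real_of_int k) = f x"
proof (cases "k \<ge> 0")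
  case True
  then have e: "real (nat k) = real_of_int k" by simp
  show ?thesis using per_nat[OF assms, of x "nat k"] unfolding e .
next
  case False
  then have e: "real (nat (-k)) = - real_of_int k" by simp
  have "f (x + real_of_int k + real (nat (-k))) = f (x + real_of_int k)" by (rule per_nat[OF assms])
  moreover have "x + real_of_int k + real (nat (-k)) = x" unfolding e by simp
  ultimately show ?thesis by simp
qed

lemma loc_int_unit: assumes "periodic1 g" "g integrable_on {0..1}"
  shows "g integrable_on {real_of_int k..real_of_int k + 1}"
proof -
  have 1: "(\<lambda>x. g (x + (- real_of_int k))) integrable_on {0 - (- real_of_int k)..1 - (- real_of_int k)}"
    using integrable_shift_real_ivl[of g 0 1 "- real_of_int k", OF assms(2)] .
  have 2: "(\<lambda>x. g (x + (- real_of_int k))) = g"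
  proof
    fix x show "g (x + (- real_of_int k)) = g x" using per_int[OF assms(1), of x "-k"] by simp
  qed
  have 3: "{0 - (- real_of_int k)..1 - (- real_of_int k)} = {real_of_int k..real_of_int k + 1}"
    by (simp add: add.commute)
  show ?thesis using 1 unfolding 2 3 .
qed

lemma loc_int_n: assumes "periodic1 g" "g integrable_on {0..1}"
  shows "g integrable_on {real_of_int k..real_of_int k + real n}"
proof (induction n)
  case 0 then show ?case using integrable_on_refl[of g "real_of_int k"] by simp
next
  case (Suc n)
  have 1: "g integrable_on {real_of_int (k + int n)..real_of_int (k + int n) + 1}"
    by (rule loc_int_unit[OF assms])
  have 3: "real_of_int (k + int n) = real_of_int k + real n" by simp
  have 2: "real_of_int k + real n + 1 = real_of_int k + real (Suc n)" by simp
  have "g integrable_on {real_of_int k + real n..real_of_int k + real (Suc n)}"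
    using 1 unfolding 3 2 .
  with Suc show ?case by (rule Henstock_Kurzweil_Integration.integrable_combine[rotated 2]) auto
qed

lemma loc_int: assumes "periodic1 g" "g integrable_on {0..1}"
  shows "g integrable_on {a..b}"
proof (cases "a \<le> b")
  case True
  define k where "k = \<lfloor>a\<rfloor>"
  define n where "n = nat (\<lceil>b\<rceil> - k)"
  have "g integrable_on {real_of_int k..real_of_int k + real n}" by (rule loc_int_n[OF assms])
  moreover have "{a..b} \<subseteq> {real_of_int k..real_of_int k + real n}"
  proof -
    have 1: "real_of_int k \<le> a" by (simp add: k_def)
    have 2: "k \<le> \<lceil>b\<rceil>" unfolding k_def using True
      by (meson floor_le_ceiling order_trans ceiling_mono)
    then have "real n = real_of_int (\<lceil>b\<rceil> - k)" by (simp add: n_def)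
    then have "b \<le> real_of_int k + real n" by simp
    with 1 show ?thesis by auto
  qed
  ultimately show ?thesis by (rule integrable_on_subinterval)
next
  case False then show ?thesis by (simp add: integrable_on_empty)
qed

lemma per_shift: assumes "periodic1 g" "g integrable_on {0..1}"
  shows "integral {x..x+1} g = integral {0..1} g"
proof -
  define k where "k = \<lfloor>x\<rfloor>"
  define t where "t = x - real_of_int k"
  have t: "0 \<le> t" "t \<le> 1" unfolding t_def k_def by linarith+
  have "integral {x - real_of_int k..x + 1 - real_of_int k} (\<lambda>y. g (y + real_of_int k)) = integral {x..x+1} g"
    by (rule integral_shift_real_ivl)
  moreover have "(\<lambda>y. g (y + real_of_int k)) = g" using per_int[OF assms(1)] by (simp add: fun_eq_iff)
  ultimately have 1: "integral {x..x+1} g = integral {t..t+1} g" unfolding t_def by (simp add: algebra_simps)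
  have "integral {1 - 1..t + 1 - 1} (\<lambda>y. g (y + 1)) = integral {1..t+1} g"
    by (rule integral_shift_real_ivl)
  moreover have "(\<lambda>y. g (y + 1)) = g" using assms(1) by (simp add: periodic1_def fun_eq_iff)
  ultimately have 2: "integral {1..t+1} g = integral {0..t} g" by simp
  have "integral {t..1} g + integral {1..t+1} g = integral {t..t+1} g"
    by (rule Henstock_Kurzweil_Integration.integral_combine[OF _ _ loc_int[OF assms]]) (use t in auto)
  moreover have "integral {0..t} g + integral {t..1} g = integral {0..1} g"
    by (rule Henstock_Kurzweil_Integration.integral_combine[OF _ _ assms(2)]) (use t in auto)
  ultimately show ?thesis using 1 2 by simp
qed

definition SI :: "(real \<Rightarrow> real) \<Rightarrow> real \<Rightarrow> real" where
  "SI h x = (if 0 \<le> x then integral {0..x} h else - integral {x..0} h)"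

lemma SI_diff: assumes "\<And>a b. h integrable_on {a..b}" "a \<le> b"
  shows "SI h b - SI h a = integral {a..b} h"
proof -
  consider "0 \<le> a" | "a < 0" "0 \<le> b" | "b < 0" using assms by linarith
  then show ?thesis
  proof cases
    case 1
    then show ?thesis using Henstock_Kurzweil_Integration.integral_combine[of 0 a b h] assms by (simp add: SI_def)
  next
    case 2
    then show ?thesis using Henstock_Kurzweil_Integration.integral_combine[of a 0 b h] assms by (simp add: SI_def)
  next
    case 3
    then show ?thesis using Henstock_Kurzweil_Integration.integral_combine[of a b 0 h] assms by (simp add: SI_def)
  qed
qed

lemma SI_local: assumes "\<And>a b. h integrable_on {a..b}" "a \<le> u"
  shows "SI h u = SI h a + integral {a..u} h"
  using SI_diff[OF assms] by simp

lemma SI_cont: assumes "\<And>a b. h integrable_on {a..b}"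
  shows "isCont (SI h) x"
proof -
  have "continuous_on {x-1..x+1} (\<lambda>u. SI h (x-1) + integral {x-1..u} h)"
    by (rule continuous_on_add[OF continuous_on_const indefinite_integral_continuous_1[OF assms]])
  then have "continuous_on {x-1..x+1} (SI h)"
  proof (rule continuous_on_eq)
    fix y assume "y \<in> {x-1..x+1}"
    then have "x - 1 \<le> y" by simp
    from SI_local[OF assms this] show "SI h (x-1) + integral {x-1..y} h = SI h y" by simp
  qed
  then show ?thesis by (rule continuous_on_interior) auto
qed

lemma SI_deriv: assumes "continuous_on UNIV h"
  shows "(SI h has_real_derivative h x) (at x)"
proof -
  have int: "\<And>a b. h integrable_on {a..b}"
    by (rule integrable_continuous_real[OF continuous_on_subset[OF assms subset_UNIV]])
  have "((\<lambda>u. integral {x-1..u} h) has_vector_derivative h x) (at x within {x-1..x+1})"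
    by (rule integral_has_vector_derivative[OF continuous_on_subset[OF assms subset_UNIV]]) auto
  moreover have "x \<in> interior {x-1..x+1}" by simp
  ultimately have "((\<lambda>u. integral {x-1..u} h) has_real_derivative h x) (at x)"
    unfolding has_real_derivative_iff_has_vector_derivative using at_within_interior by metis
  from DERIV_add[OF DERIV_const this]
  have d: "((\<lambda>u. SI h (x-1) + integral {x-1..u} h) has_real_derivative h x) (at x)"
    by simp
  show ?thesis
  proof (rule has_field_derivative_transform_within_open[OF d, of "{x-1<..<x+1}"])
    fix y assume "y \<in> {x-1<..<x+1}"
    then have "x - 1 \<le> y" by simp
    from SI_local[OF int this] show "SI h (x-1) + integral {x-1..y} h = SI h y" by simp
  qed auto
qed



lemma poisson_exists:
  assumes per: "periodic1 g" and gi: "g integrable_on {0..1}" and g0: "integral {0..1} g = 0"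
  shows "\<exists>phi. periodic1 phi \<and> weak_second_deriv phi g \<and> integral {0..1} phi = 0"
proof -
  have gint: "\<And>a b. g integrable_on {a..b}" by (rule loc_int[OF per gi])
  define G where "G = SI g"
  have Gc: "isCont G x" for x unfolding G_def by (rule SI_cont[OF gint])
  have Gcu: "continuous_on S G" for S using Gc by (simp add: continuous_at_imp_continuous_on)
  have Gper: "periodic1 G" unfolding periodic1_def
  proof
    fix x
    have "G (x+1) - G x = integral {x..x+1} g" unfolding G_def by (rule SI_diff[OF gint]) simp
    also have "\<dots> = 0" using per_shift[OF per gi] g0 by simp
    finally show "G (x+1) = G x" by simp
  qed
  define c where "c = - integral {0..1} G"
  define P where "P = (\<lambda>x. G x + c)"
  have Pc: "continuous_on S P" for S unfolding P_def by (intro continuous_intros Gcu)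
  have Pint: "\<And>a b. P integrable_on {a..b}" by (rule integrable_continuous_real[OF Pc])
  have Pper: "periodic1 P" using Gper by (simp add: periodic1_def P_def)
  have P0: "integral {0..1} P = 0"
  proof -
    have "integral {0..1} P = integral {0..1} G + c"
      unfolding P_def using Henstock_Kurzweil_Integration.integral_add[of G "{0..1}" "\<lambda>x. c", OF integrable_continuous_real[OF Gcu] integrable_const_ivl] by simp
    then show ?thesis by (simp add: c_def)
  qed
  define phi0 where "phi0 = SI P"
  have dphi0: "(phi0 has_real_derivative P x) (at x)" for x
    unfolding phi0_def by (rule SI_deriv[OF Pc])
  have phi0per: "periodic1 phi0" unfolding periodic1_def
  proof
    fix x
    have "phi0 (x+1) - phi0 x = integral {x..x+1} P" unfolding phi0_def by (rule SI_diff[OF Pint]) simp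
    also have "\<dots> = 0" using per_shift[OF Pper Pint] P0 by simp
    finally show "phi0 (x+1) = phi0 x" by simp
  qed
  have phi0c: "continuous_on S phi0" for S
    using dphi0 by (meson DERIV_continuous continuous_at_imp_continuous_on)
  define d where "d = - integral {0..1} phi0"
  define phi where "phi = (\<lambda>x. phi0 x + d)"
  have dphi: "(phi has_real_derivative P x) (at x)" for x
    unfolding phi_def using dphi0[of x] by (auto intro!: derivative_eq_intros)
  have derphi: "deriv phi x = P x" for x by (rule DERIV_imp_deriv[OF dphi])
  have "periodic1 phi" using phi0per by (simp add: periodic1_def phi_def)
  moreover have "weak_second_deriv phi g"
    unfolding weak_second_deriv_def
  proof (intro conjI allI impI)
    fix x show "phi differentiable (at x)" using dphi real_differentiable_def by blast
  next
    fix a b :: real assume ab: "a \<le> b"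
    show "g integrable_on {a..b}" by (rule gint)
    have "deriv phi b - deriv phi a = G b - G a" by (simp add: derphi P_def)
    also have "\<dots> = integral {a..b} g" unfolding G_def by (rule SI_diff[OF gint ab])
    finally show "deriv phi b - deriv phi a = integral {a..b} g" .
  qed
  moreover have "integral {0..1} phi = 0"
  proof -
    have "integral {0..1} phi = integral {0..1} phi0 + d"
      unfolding phi_def using Henstock_Kurzweil_Integration.integral_add[of phi0 "{0..1}" "\<lambda>x. d", OF integrable_continuous_real[OF phi0c] integrable_const_ivl] by simp
    then show ?thesis by (simp add: d_def)
  qed
  ultimately show ?thesis by blast
qed

lemma weak_deriv: assumes "weak_second_deriv phi chi"
  shows "(phi has_real_derivative deriv phi x) (at x)"
  using assms DERIV_deriv_iff_real_differentiable unfolding weak_second_deriv_def by blast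

lemma poisson_unique:
  assumes "poisson_sol f p1" "poisson_sol f p2" shows "p1 = p2"
proof -
  have w1: "weak_second_deriv p1 (\<lambda>x. - f x)" and w2: "weak_second_deriv p2 (\<lambda>x. - f x)"
    using assms by (auto simp: poisson_sol_def)
  define c where "c = deriv p1 0 - deriv p2 0"
  have dconst: "deriv p1 x - deriv p2 x = c" for x
  proof (cases "0 \<le> x")
    case True
    have e1: "deriv p1 x - deriv p1 0 = integral {0..x} (\<lambda>x. - f x)"
      using w1 True unfolding weak_second_deriv_def by blast
    have e2: "deriv p2 x - deriv p2 0 = integral {0..x} (\<lambda>x. - f x)"
      using w2 True unfolding weak_second_deriv_def by blast
    show ?thesis unfolding c_def using e1 e2 by linarith
  next
    case False
    have e1: "deriv p1 0 - deriv p1 x = integral {x..0} (\<lambda>x. - f x)"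
      using w1 False unfolding weak_second_deriv_def by simp
    have e2: "deriv p2 0 - deriv p2 x = integral {x..0} (\<lambda>x. - f x)"
      using w2 False unfolding weak_second_deriv_def by simp
    show ?thesis unfolding c_def using e1 e2 by linarith
  qed
  define q where "q = (\<lambda>x. p1 x - p2 x - c * x)"
  have dq: "DERIV q x :> 0" for x
  proof -
    have "DERIV q x :> deriv p1 x - deriv p2 x - c * 1"
      unfolding q_def using weak_deriv[OF w1] weak_deriv[OF w2]
      by (auto intro!: derivative_eq_intros)
    then show ?thesis using dconst by simp
  qed
  have qc: "q x = q 0" for x using DERIV_isconst_all dq by blast
  have "q 1 = q 0" by (rule qc)
  moreover have "p1 1 = p1 0" "p2 1 = p2 0" using assms
    by (auto simp: poisson_sol_def periodic1_def dest: spec[of _ 0])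
  ultimately have c0: "c = 0" by (simp add: q_def)
  then have pc: "p1 x - p2 x = p1 0 - p2 0" for x using qc[of x] unfolding q_def by simp
  have cont: "continuous_on {0..1} p" if "weak_second_deriv p (\<lambda>x. - f x)" for p
    using weak_deriv[OF that] by (meson DERIV_continuous continuous_at_imp_continuous_on)
  have "integral {0..1} (\<lambda>x. p1 x - p2 x) = integral {0..1} p1 - integral {0..1} p2"
    by (intro integral_diff integrable_continuous_real cont w1 w2)
  also have "\<dots> = 0" using assms by (simp add: poisson_sol_def)
  finally have "integral {0..1} (\<lambda>x. p1 x - p2 x) = 0" .
  moreover have eq: "(\<lambda>x. p1 x - p2 x) = (\<lambda>x. p1 0 - p2 0)"
    by (rule ext) (rule pc)
  moreover have "integral {0..1} (\<lambda>x::real. p1 0 - p2 0) = p1 0 - p2 0" by simp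
  ultimately have z: "p1 0 - p2 0 = 0" by (simp only: eq)
  show ?thesis
  proof
    fix x show "p1 x = p2 x" using pc[of x] z by linarith
  qed
qed

lemma pot_sol: assumes "\<exists>phi. poisson_sol f phi" shows "poisson_sol f (THE phi. poisson_sol f phi)"
  using assms poisson_unique by (metis theI)



abbreviation "LL \<equiv> lebesgue_on {0..1::real}"

lemma meas_L: assumes "f \<in> borel_measurable lborel" shows "f \<in> borel_measurable LL"
proof -
  have "f \<in> borel \<rightarrow>\<^sub>M borel" using assms unfolding measurable_lborel2 .
  from measurable_compose[OF id_borel_measurable_lebesgue_on this] show ?thesis unfolding id_apply .
qed

lemma fin_L: "finite_measure LL"
  by (rule finite_measure_lebesgue_on) simp

lemma int_L: fixes f :: "real \<Rightarrow> real" assumes "f \<in> borel_measurable LL" "AE x in LL. \<bar>f x\<bar> \<le> B"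
  shows "integrable LL f"
  using finite_measure.integrable_const_bound[OF fin_L, of f B] assms by simp

lemma conv_L: fixes f :: "real \<Rightarrow> real" assumes "integrable LL f" shows "integral {0..1} f = integral\<^sup>L LL f"
  using has_integral_integral_lebesgue_on[OF assms] by (simp add: integral_unique)

lemma intable_L: fixes f :: "real \<Rightarrow> real" assumes "integrable LL f" shows "f integrable_on {0..1}"
  using integrable_on_lebesgue_on[OF assms] by simp

lemma space_L: "space LL = {0..1}" by simp

lemma measure_L: "measure LL (space LL) = 1"
  by (simp add: measure_restrict_space)

lemma ent_meas: "(\<lambda>s. ent m s) \<in> borel_measurable borel"
  unfolding ent_def Let_def by measurable

lemma AE_bound: assumes "Linf_norm_T u \<le> ereal M" shows "AE x in LL. \<bar>u x\<bar> \<le> M"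
proof -
  have "AE x in LL. ereal \<bar>u x\<bar> \<le> esssup LL (\<lambda>x. ereal \<bar>u x\<bar>)" by (rule esssup_AE)
  moreover have "\<bar>u x\<bar> \<le> M" if "ereal \<bar>u x\<bar> \<le> esssup LL (\<lambda>x. ereal \<bar>u x\<bar>)" for x
  proof -
    have "ereal \<bar>u x\<bar> \<le> ereal M" using that assms unfolding Linf_norm_T_def by (rule order_trans)
    then show ?thesis by simp
  qed
  ultimately show ?thesis by (rule eventually_mono)
qed

lemma hk_nonneg: "(\<And>x. x \<in> S \<Longrightarrow> 0 \<le> f x) \<Longrightarrow> 0 \<le> integral S (f::real \<Rightarrow> real)"
  by (cases "f integrable_on S") (auto intro: Henstock_Kurzweil_Integration.integral_nonneg simp: not_integrable_integral)



lemma sq_bound: fixes s m M :: real assumes "0 \<le> s" "s \<le> M" "0 < m" "m \<le> M"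
  shows "(s - m)^2 \<le> M^2"
proof -
  have "\<bar>s - m\<bar> \<le> \<bar>M\<bar>" using assms by auto
  then show ?thesis by (simp add: abs_le_square_iff)
qed

lemma amgm: fixes a b c :: real assumes "c > 0"
  shows "\<bar>a * b\<bar> \<le> c / 2 * a^2 + b^2 / (2 * c)"
proof -
  have "0 \<le> (c * \<bar>a\<bar> - \<bar>b\<bar>)^2" by simp
  then have "2 * c * \<bar>a * b\<bar> \<le> c^2 * a^2 + b^2"
    by (simp add: power2_eq_square algebra_simps abs_mult)
  then have "\<bar>a * b\<bar> \<le> (c^2 * a^2 + b^2) / (2 * c)" using assms
    by (simp add: le_divide_eq algebra_simps)
  also have "\<dots> = c / 2 * a^2 + b^2 / (2 * c)" using assms
    by (simp add: field_simps power2_eq_square)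
  finally show ?thesis .
qed

lemma core:
  fixes u v :: "real \<Rightarrow> real" and M m CR :: real
  assumes ell: "elliptic_const CR"
    and lu: "Linf_nonneg u" and lv: "Linf_nonneg v"
    and nu: "Linf_norm_T u \<le> ereal M" and nv: "Linf_norm_T v \<le> ereal M"
    and mean: "(1/2) * integral {0..1} (\<lambda>x. u x + v x) = m" and mpos: "0 < m"
  shows "integral {0..1} (\<lambda>x. (u x - m)^2 + (v x - m)^2) / (2*M) \<le> H_T m u v \<and>
         H_T m u v \<le> integral {0..1} (\<lambda>x. (u x - m)^2 + (v x - m)^2) / m \<and>
         \<bar>integral {0..1} (\<lambda>x. (u x - v x) * deriv (pot m u v) x)\<bar>
            \<le> CR * integral {0..1} (\<lambda>x. (u x - m)^2 + (v x - m)^2) \<and> m \<le> M"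
proof -
  have CRpos: "CR > 0" using ell by (simp add: elliptic_const_def)
  have pu: "periodic1 u" and mu: "u \<in> borel_measurable lborel" and u0: "\<And>x. 0 \<le> u x"
    using lu by (auto simp: Linf_nonneg_def)
  have pv: "periodic1 v" and mv: "v \<in> borel_measurable lborel" and v0: "\<And>x. 0 \<le> v x"
    using lv by (auto simp: Linf_nonneg_def)
  have muL[measurable]: "u \<in> borel_measurable LL" by (rule meas_L[OF mu])
  have mvL[measurable]: "v \<in> borel_measurable LL" by (rule meas_L[OF mv])
  have aeu: "AE x in LL. u x \<le> M" using AE_bound[OF nu] by eventually_elim simp
  have aev: "AE x in LL. v x \<le> M" using AE_bound[OF nv] by eventually_elim simp
  have iu: "integrable LL u" by (rule int_L[OF muL AE_bound[OF nu]])
  have iv: "integrable LL v" by (rule int_L[OF mvL AE_bound[OF nv]])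
  have iuv: "integrable LL (\<lambda>x. u x + v x)" using iu iv by simp
  have "integral {0..1} (\<lambda>x. u x + v x) = integral\<^sup>L LL (\<lambda>x. u x + v x)" by (rule conv_L[OF iuv])
  also have "\<dots> \<le> integral\<^sup>L LL (\<lambda>x. 2 * M)"
    by (rule integral_mono_AE[OF iuv]) (use aeu aev in \<open>auto elim: eventually_elim2\<close>)
  also have "\<dots> = 2 * M" using measure_L by simp
  finally have mM: "m \<le> M" using mean by simp
  have Mpos: "0 < M" using mM mpos by simp
  have ubd: "\<bar>u x\<bar> \<le> M" if "u x \<le> M" for x using that u0[of x] by simp
  have msq[measurable]: "(\<lambda>x. (u x - m)^2) \<in> borel_measurable LL" "(\<lambda>x. (v x - m)^2) \<in> borel_measurable LL"
    by measurable
  have isqu: "integrable LL (\<lambda>x. (u x - m)^2)"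
    by (rule int_L[OF msq(1), of "M^2"]) (use aeu in \<open>eventually_elim, use sq_bound u0 mpos mM in auto\<close>)
  have isqv: "integrable LL (\<lambda>x. (v x - m)^2)"
    by (rule int_L[OF msq(2), of "M^2"]) (use aev in \<open>eventually_elim, use sq_bound v0 mpos mM in auto\<close>)
  define DL where "DL = integral\<^sup>L LL (\<lambda>x. (u x - m)^2) + integral\<^sup>L LL (\<lambda>x. (v x - m)^2)"
  have Deq: "integral {0..1} (\<lambda>x. (u x - m)^2 + (v x - m)^2) = DL"
    unfolding DL_def using isqu isqv by (simp add: conv_L)
  have ment: "(\<lambda>x. ent m (u x)) \<in> borel_measurable LL" "(\<lambda>x. ent m (v x)) \<in> borel_measurable LL"
    using measurable_compose[OF muL ent_meas] measurable_compose[OF mvL ent_meas] by auto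
  have ientu: "integrable LL (\<lambda>x. ent m (u x))"
  proof (rule int_L[OF ment(1), of "M^2/m"])
    show "AE x in LL. \<bar>ent m (u x)\<bar> \<le> M^2/m" using aeu
    proof eventually_elim
      case (elim x)
      have "ent m (u x) \<le> (u x - m)^2 / m" by (rule ent_upper[OF mpos u0])
      also have "\<dots> \<le> M^2 / m" using sq_bound[OF u0 elim mpos mM] mpos by (simp add: divide_right_mono)
      finally show ?case using ent_nonneg[OF mpos u0[of x]] by simp
    qed
  qed
  have ientv: "integrable LL (\<lambda>x. ent m (v x))"
  proof (rule int_L[OF ment(2), of "M^2/m"])
    show "AE x in LL. \<bar>ent m (v x)\<bar> \<le> M^2/m" using aev
    proof eventually_elim
      case (elim x)
      have "ent m (v x) \<le> (v x - m)^2 / m" by (rule ent_upper[OF mpos v0])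
      also have "\<dots> \<le> M^2 / m" using sq_bound[OF v0 elim mpos mM] mpos by (simp add: divide_right_mono)
      finally show ?case using ent_nonneg[OF mpos v0[of x]] by simp
    qed
  qed
  have Heq: "H_T m u v = integral\<^sup>L LL (\<lambda>x. ent m (u x)) + integral\<^sup>L LL (\<lambda>x. ent m (v x))"
    unfolding H_T_def using ientu ientv by (simp add: conv_L)
  have lowu: "integral\<^sup>L LL (\<lambda>x. (u x - m)^2) / (2*M) \<le> integral\<^sup>L LL (\<lambda>x. ent m (u x))"
  proof -
    have "integral\<^sup>L LL (\<lambda>x. (u x - m)^2 / (2*M)) \<le> integral\<^sup>L LL (\<lambda>x. ent m (u x))"
      by (rule integral_mono_AE) (use isqu ientu aeu ent_lower[OF mpos mM u0] in \<open>auto elim!: eventually_mono\<close>)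
    then show ?thesis by simp
  qed
  have lowv: "integral\<^sup>L LL (\<lambda>x. (v x - m)^2) / (2*M) \<le> integral\<^sup>L LL (\<lambda>x. ent m (v x))"
  proof -
    have "integral\<^sup>L LL (\<lambda>x. (v x - m)^2 / (2*M)) \<le> integral\<^sup>L LL (\<lambda>x. ent m (v x))"
      by (rule integral_mono_AE) (use isqv ientv aev ent_lower[OF mpos mM v0] in \<open>auto elim!: eventually_mono\<close>)
    then show ?thesis by simp
  qed
  have upu: "integral\<^sup>L LL (\<lambda>x. ent m (u x)) \<le> integral\<^sup>L LL (\<lambda>x. (u x - m)^2) / m"
  proof -
    have "integral\<^sup>L LL (\<lambda>x. ent m (u x)) \<le> integral\<^sup>L LL (\<lambda>x. (u x - m)^2 / m)"
      by (rule integral_mono) (use isqu ientu ent_upper[OF mpos u0] in auto)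
    then show ?thesis by simp
  qed
  have upv: "integral\<^sup>L LL (\<lambda>x. ent m (v x)) \<le> integral\<^sup>L LL (\<lambda>x. (v x - m)^2) / m"
  proof -
    have "integral\<^sup>L LL (\<lambda>x. ent m (v x)) \<le> integral\<^sup>L LL (\<lambda>x. (v x - m)^2 / m)"
      by (rule integral_mono) (use isqv ientv ent_upper[OF mpos v0] in auto)
    then show ?thesis by simp
  qed
  have H1: "DL / (2*M) \<le> H_T m u v" using lowu lowv unfolding Heq DL_def by (simp add: add_divide_distrib)
  have Hup: "H_T m u v \<le> DL / m" using upu upv unfolding Heq DL_def by (simp add: add_divide_distrib)
  define f where "f = (\<lambda>x. u x + v x - 2 * m)"
  have mfL[measurable]: "f \<in> borel_measurable LL" unfolding f_def by measurable
  have mf: "f \<in> borel_measurable lborel" unfolding f_def using mu mv by measurable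
  have pf: "periodic1 f" using pu pv by (simp add: periodic1_def f_def)
  have fbd: "AE x in LL. \<bar>f x\<bar> \<le> 2 * M" using aeu aev
  proof eventually_elim
    case (elim x)
    then show ?case using u0[of x] v0[of x] mM mpos by (simp add: f_def abs_le_iff)
  qed
  have ifL: "integrable LL f" by (rule int_L[OF mfL fbd])
  have fint: "f integrable_on {0..1}" by (rule intable_L[OF ifL])
  have uvint: "(\<lambda>x. u x + v x) integrable_on {0..1}" by (rule intable_L[OF iuv])
  have f0: "integral {0..1} f = 0"
  proof -
    have "integral {0..1} f = integral {0..1} (\<lambda>x. u x + v x) - integral {0..1} (\<lambda>x::real. 2 * m)"
      unfolding f_def by (rule Henstock_Kurzweil_Integration.integral_diff[OF uvint integrable_const_ivl])
    then show ?thesis using mean by simp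
  qed
  have if2L: "integrable LL (\<lambda>x. (f x)^2)"
  proof (rule int_L[of _ "(2*M)^2"])
    show "(\<lambda>x. (f x)^2) \<in> borel_measurable LL" by measurable
    show "AE x in LL. \<bar>(f x)^2\<bar> \<le> (2*M)^2" using fbd
    proof eventually_elim
      case (elim x)
      then have "\<bar>f x\<bar> \<le> \<bar>2*M\<bar>" by simp
      then show ?case by (simp add: abs_le_square_iff)
    qed
  qed
  have f2int: "(\<lambda>x. (f x)^2) integrable_on {0..1}" by (rule intable_L[OF if2L])
  have ex: "\<exists>phi. poisson_sol f phi"
  proof -
    have "periodic1 (\<lambda>x. - f x)" using pf by (simp add: periodic1_def)
    moreover have "(\<lambda>x. - f x) integrable_on {0..1}" using fint by (rule integrable_neg)
    moreover have "integral {0..1} (\<lambda>x. - f x) = 0" using f0 by (simp add: integral_neg)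
    ultimately obtain phi where "periodic1 phi" "weak_second_deriv phi (\<lambda>x. - f x)" "integral {0..1} phi = 0"
      using poisson_exists by blast
    then show ?thesis unfolding poisson_sol_def by blast
  qed
  define p where "p = pot m u v"
  have psol: "poisson_sol f p" unfolding p_def pot_def f_def[symmetric] by (rule pot_sol[OF ex])
  have pw: "weak_second_deriv p (\<lambda>x. - f x)" using psol by (simp add: poisson_sol_def)
  define P where "P = deriv p"
  have Pc: "continuous_on {0..1} P"
  proof -
    have nfint: "(\<lambda>x. - f x) integrable_on {0..1}" using fint by (rule integrable_neg)
    have "continuous_on {0..1} (\<lambda>x. P 0 + integral {0..x} (\<lambda>x. - f x))"
      by (rule continuous_on_add[OF continuous_on_const indefinite_integral_continuous_1[OF nfint]])
    then show ?thesis
    proof (rule continuous_on_eq)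
      fix x assume "x \<in> {0..1::real}"
      then have "0 \<le> x" by simp
      then have "deriv p x - deriv p 0 = integral {0..x} (\<lambda>x. - f x)"
        using pw unfolding weak_second_deriv_def by blast
      then show "P 0 + integral {0..x} (\<lambda>x. - f x) = P x" unfolding P_def by simp
    qed
  qed
  have mPL[measurable]: "P \<in> borel_measurable LL"
    by (rule continuous_imp_measurable_on_sets_lebesgue[OF Pc]) simp
  obtain BP where BP: "\<And>x. x \<in> {0..1} \<Longrightarrow> norm (P x) \<le> BP"
    using continuous_on_compact_bound[OF compact_Icc Pc] by blast
  have aeP: "AE x in LL. \<bar>P x\<bar> \<le> BP"
    using AE_space[of LL] by eventually_elim (use BP in auto)
  define j where "j = (\<lambda>x. u x - v x)"
  have mjL[measurable]: "j \<in> borel_measurable LL" unfolding j_def by measurable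
  have jbd: "AE x in LL. \<bar>j x\<bar> \<le> M" using aeu aev
  proof eventually_elim
    case (elim x)
    then show ?case using u0[of x] v0[of x] by (simp add: j_def abs_le_iff)
  qed
  have ijP: "integrable LL (\<lambda>x. j x * P x)"
  proof (rule int_L[of _ "M * BP"])
    show "(\<lambda>x. j x * P x) \<in> borel_measurable LL" by measurable
    show "AE x in LL. \<bar>j x * P x\<bar> \<le> M * BP" using jbd aeP
    proof eventually_elim
      case (elim x)
      then show ?case by (simp add: abs_mult mult_mono')
    qed
  qed
  have ij2: "integrable LL (\<lambda>x. (j x)^2)"
  proof (rule int_L[of _ "M^2"])
    show "(\<lambda>x. (j x)^2) \<in> borel_measurable LL" by measurable
    show "AE x in LL. \<bar>(j x)^2\<bar> \<le> M^2" using jbd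
    proof eventually_elim
      case (elim x)
      then have "\<bar>j x\<bar> \<le> \<bar>M\<bar>" by simp
      then show ?case by (simp add: abs_le_square_iff)
    qed
  qed
  have iP2: "integrable LL (\<lambda>x. (P x)^2)"
  proof (rule int_L[of _ "BP^2"])
    show "(\<lambda>x. (P x)^2) \<in> borel_measurable LL" by measurable
    show "AE x in LL. \<bar>(P x)^2\<bar> \<le> BP^2" using aeP
    proof eventually_elim
      case (elim x)
      then have "\<bar>P x\<bar> \<le> \<bar>BP\<bar>" by simp
      then show ?case by (simp add: abs_le_square_iff)
    qed
  qed
  have H2: "H2_norm_T p (\<lambda>x. - f x) \<le> CR * L2_norm_T f"
    using ell unfolding elliptic_const_def using pf mf fint f2int f0 psol by blast
  define A where "A = integral {0..1} (\<lambda>x. (p x)^2)"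
  define B where "B = integral {0..1} (\<lambda>x. (deriv p x)^2)"
  define Cf where "Cf = integral {0..1} (\<lambda>x. (f x)^2)"
  have A0: "0 \<le> A" unfolding A_def by (rule hk_nonneg) simp
  have B0: "0 \<le> B" unfolding B_def by (rule hk_nonneg) simp
  have C0: "0 \<le> Cf" unfolding Cf_def by (rule hk_nonneg) simp
  have "sqrt (A + B + Cf) \<le> CR * sqrt Cf"
    using H2 unfolding H2_norm_T_def L2_norm_T_def A_def B_def Cf_def by simp
  moreover have ABC: "0 \<le> A + B + Cf" using A0 B0 C0 by simp
  ultimately have "(sqrt (A + B + Cf))^2 \<le> (CR * sqrt Cf)^2"
    by (intro power_mono) simp_all
  then have "A + B + Cf \<le> CR^2 * Cf" using C0 ABC by (simp add: power_mult_distrib)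
  then have BC: "B \<le> CR^2 * Cf" using A0 C0 by simp
  have BL: "B = integral\<^sup>L LL (\<lambda>x. (P x)^2)" unfolding B_def P_def[symmetric] by (rule conv_L[OF iP2])
  have CL: "Cf = integral\<^sup>L LL (\<lambda>x. (f x)^2)" unfolding Cf_def by (rule conv_L[OF if2L])
  have XL: "integral {0..1} (\<lambda>x. (u x - v x) * deriv (pot m u v) x) = integral\<^sup>L LL (\<lambda>x. j x * P x)"
  proof -
    have "(\<lambda>x. (u x - v x) * deriv (pot m u v) x) = (\<lambda>x. j x * P x)"
      by (simp add: j_def P_def p_def)
    then show ?thesis using conv_L[OF ijP] by simp
  qed
  have ibnd: "integrable LL (\<lambda>x. CR / 2 * (j x)^2 + (P x)^2 / (2 * CR))"
    using ij2 iP2 by simp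
  have "\<bar>integral\<^sup>L LL (\<lambda>x. j x * P x)\<bar> \<le> integral\<^sup>L LL (\<lambda>x. CR / 2 * (j x)^2 + (P x)^2 / (2 * CR))"
    by (rule integral_abs_bound_integral[OF ijP ibnd]) (rule amgm[OF CRpos])
  also have "\<dots> = CR / 2 * integral\<^sup>L LL (\<lambda>x. (j x)^2) + B / (2 * CR)"
    using ij2 iP2 by (simp add: BL)
  also have "\<dots> \<le> CR / 2 * integral\<^sup>L LL (\<lambda>x. (j x)^2) + CR / 2 * Cf"
  proof -
    have "B / (2 * CR) \<le> CR^2 * Cf / (2 * CR)" using BC CRpos by (simp add: divide_right_mono)
    also have "\<dots> = CR / 2 * Cf" using CRpos by (simp add: field_simps power2_eq_square)
    finally show ?thesis by simp
  qed
  also have "\<dots> = CR / 2 * integral\<^sup>L LL (\<lambda>x. (j x)^2 + (f x)^2)"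
    using ij2 if2L by (simp add: CL algebra_simps)
  also have "integral\<^sup>L LL (\<lambda>x. (j x)^2 + (f x)^2) = integral\<^sup>L LL (\<lambda>x. 2 * ((u x - m)^2 + (v x - m)^2))"
    by (rule Bochner_Integration.integral_cong) (simp_all add: j_def f_def power2_eq_square algebra_simps)
  also have "\<dots> = 2 * DL" unfolding DL_def using isqu isqv by simp
  finally have X: "\<bar>integral {0..1} (\<lambda>x. (u x - v x) * deriv (pot m u v) x)\<bar> \<le> CR * DL"
    unfolding XL by simp
  show ?thesis using H1 Hup X mM unfolding Deq by simp
qed
theorem lemma3p3:
  fixes CR :: real
  assumes "elliptic_const CR"
  shows "\<forall>M::real. \<forall>m::real. \<forall>eps::real.
     M > 0 \<and> m > 0 \<and> 0 < eps \<and> eps < 1 / (4 * M * CR) \<longrightarrow>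
     (\<exists>C1 C2 :: real. C1 > 0 \<and> C2 > 0 \<and>
        (\<forall>u v. Linf_nonneg u \<and> Linf_nonneg v \<and>
            max (Linf_norm_T u) (Linf_norm_T v) = ereal M \<and>
            (1/2) * integral {0..1} (\<lambda>x. u x + v x) = m \<longrightarrow>
            (1 / C2) * integral {0..1} (\<lambda>x. (u x - m)\<^sup>2 + (v x - m)\<^sup>2) \<le> E_T eps m u v \<and>
            E_T eps m u v \<le> (1 / C1) * integral {0..1} (\<lambda>x. (u x - m)\<^sup>2 + (v x - m)\<^sup>2)))"
proof (intro allI impI)
  fix M m eps :: real
  assume h: "M > 0 \<and> m > 0 \<and> 0 < eps \<and> eps < 1 / (4 * M * CR)"
  then have Mp: "M > 0" and mp: "m > 0" and ep: "eps > 0" and el: "eps < 1 / (4 * M * CR)" by auto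
  have CRpos: "CR > 0" using assms by (simp add: elliptic_const_def)
  have "eps * (4 * M * CR) < 1" using el Mp CRpos by (simp add: less_divide_eq)
  then have eCR: "eps * CR < 1 / (4 * M)" using Mp by (simp add: less_divide_eq algebra_simps)
  define a where "a = 1 / (2 * M) - eps * CR"
  define b where "b = 1 / m + eps * CR"
  have "1 / (4 * M) < 1 / (2 * M)" using Mp by (simp add: frac_less2)
  then have ap: "a > 0" unfolding a_def using eCR by simp
  have bp: "b > 0" unfolding b_def using mp ep CRpos by (simp add: add_pos_pos)
  show "\<exists>C1 C2 :: real. C1 > 0 \<and> C2 > 0 \<and>
        (\<forall>u v. Linf_nonneg u \<and> Linf_nonneg v \<and>
            max (Linf_norm_T u) (Linf_norm_T v) = ereal M \<and>
            (1/2) * integral {0..1} (\<lambda>x. u x + v x) = m \<longrightarrow>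
            (1 / C2) * integral {0..1} (\<lambda>x. (u x - m)\<^sup>2 + (v x - m)\<^sup>2) \<le> E_T eps m u v \<and>
            E_T eps m u v \<le> (1 / C1) * integral {0..1} (\<lambda>x. (u x - m)\<^sup>2 + (v x - m)\<^sup>2))"
  proof (rule exI[of _ "1/b"], rule exI[of _ "1/a"], intro conjI allI impI)
    show "1 / b > 0" using bp by simp
    show "1 / a > 0" using ap by simp
    fix u v :: "real \<Rightarrow> real"
    assume H: "Linf_nonneg u \<and> Linf_nonneg v \<and>
            max (Linf_norm_T u) (Linf_norm_T v) = ereal M \<and>
            (1/2) * integral {0..1} (\<lambda>x. u x + v x) = m"
    then have lu: "Linf_nonneg u" and lv: "Linf_nonneg v"
      and mx: "max (Linf_norm_T u) (Linf_norm_T v) = ereal M"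
      and mean: "(1/2) * integral {0..1} (\<lambda>x. u x + v x) = m" by auto
    have nu: "Linf_norm_T u \<le> ereal M" using mx by (metis max.cobounded1)
    have nv: "Linf_norm_T v \<le> ereal M" using mx by (metis max.cobounded2)
    define D where "D = integral {0..1} (\<lambda>x. (u x - m)\<^sup>2 + (v x - m)\<^sup>2)"
    define X where "X = integral {0..1} (\<lambda>x. (u x - v x) * deriv (pot m u v) x)"
    have c: "D / (2*M) \<le> H_T m u v" "H_T m u v \<le> D / m" "\<bar>X\<bar> \<le> CR * D"
      using core[OF assms lu lv nu nv mean mp] unfolding D_def X_def by auto
    have D0: "0 \<le> D" unfolding D_def by (rule hk_nonneg) simp
    have E: "E_T eps m u v = H_T m u v + eps * X" unfolding E_T_def X_def by simp
    have X1: "- (CR * D) \<le> X" "X \<le> CR * D" using c(3) by auto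
    have "eps * (- (CR * D)) \<le> eps * X" using X1(1) ep by (intro mult_left_mono) auto
    then have lo: "D / (2*M) - eps * CR * D \<le> E_T eps m u v" using c(1) E by simp
    have "eps * X \<le> eps * (CR * D)" using X1(2) ep by (intro mult_left_mono) auto
    then have up: "E_T eps m u v \<le> D / m + eps * CR * D" using c(2) E by simp
    have "1 / (1 / a) * D = D / (2*M) - eps * CR * D" unfolding a_def by (simp add: algebra_simps)
    then show "1 / (1 / a) * integral {0..1} (\<lambda>x. (u x - m)\<^sup>2 + (v x - m)\<^sup>2) \<le> E_T eps m u v"
      using lo unfolding D_def by simp
    have "1 / (1 / b) * D = D / m + eps * CR * D" unfolding b_def by (simp add: algebra_simps)
    then show "E_T eps m u v \<le> 1 / (1 / b) * integral {0..1} (\<lambda>x. (u x - m)\<^sup>2 + (v x - m)\<^sup>2)"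
      using up unfolding D_def by simp
  qed
qed


end
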